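(* Let $\widehat{A}=A+\epsilon B$ and $\widehat{C}=C+\epsilon D$ with $A,B,C,D\in\mathbb{R}^{n\times n}$ be such that the dual Moore-Penrose generalized inverses of $\widehat{A}$, $\widehat{C}$ and $\widehat{A}\widehat{C}$ exist and have the particular form $\widehat{A}^{\dagger}=A^{\dagger}-\epsilon A^{\dagger}BA^{\dagger}$, $\widehat{C}^{\dagger}=C^{\dagger}-\epsilon C^{\dagger}DC^{\dagger}$, $(\widehat{A}\widehat{C})^{\dagger}=(AC)^{\dagger}-\epsilon (AC)^{\dagger}(AD+BC)(AC)^{\dagger}$. If $AC=CA$, $A^*C=CA^*$, $C^{\dagger}B=BC^{\dagger}$ and $A^{\dagger}D=DA^{\dagger}$, then $(\widehat{A}\widehat{C})^{\dagger}=\widehat{A}^{\dagger}\widehat{C}^{\dagger}=\widehat{C}^{\dagger}\widehat{A}^{\dagger}$.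
   Context: A dual number is $a+\epsilon b$ with $a,b\in\mathbb{R}$, where $\epsilon\neq 0$, $\epsilon^2=0$ and $\epsilon$ commutes with reals. A dual matrix is $A+\epsilon B$ with $A,B$ real; sums and products are computed formally using $\epsilon^2=0$, transposition is $(A+\epsilon B)^T=A^T+\epsilon B^T$, and equality means equality of real and dual parts. $A^\dagger$ is the Moore-Penrose inverse and $A^*$ the (conjugate) transpose of a real matrix $A$. The dual Moore-Penrose generalized inverse (DMPGI) $\widehat{A}^\dagger$ of a dual matrix $\widehat{A}$ is the unique dual matrix $\widehat{X}$ (if it exists) with $\widehat{A}\widehat{X}\widehat{A}=\widehat{A}$, $\widehat{X}\widehat{A}\widehat{X}=\widehat{X}$, $(\widehat{A}\widehat{X})^T=\widehat{A}\widehat{X}$, $(\widehat{X}\widehat{A})^T=\widehat{X}\widehat{A}$. *)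

theory Defs
  imports "HOL-Analysis.Analysis"
begin

definition is_MP :: "real^('n::finite)^'n \<Rightarrow> real^'n^'n \<Rightarrow> bool" where
  "is_MP A X \<longleftrightarrow> A ** X ** A = A \<and> X ** A ** X = X \<and>
     transpose (A ** X) = A ** X \<and> transpose (X ** A) = X ** A"

definition mp_inv :: "real^('n::finite)^'n \<Rightarrow> real^'n^'n" where
  "mp_inv A = (THE X. is_MP A X)"

text \<open>Dual matrices A + eps B as pairs (A, B) of real matrices.\<close>
type_synonym 'n dmat = "(real^'n^'n) \<times> (real^'n^'n)"

definition dmult :: "('n::finite) dmat \<Rightarrow> 'n dmat \<Rightarrow> 'n dmat" where
  "dmult P Q = (fst P ** fst Q, fst P ** snd Q + snd P ** fst Q)"

definition dtrans :: "('n::finite) dmat \<Rightarrow> 'n dmat" where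
  "dtrans P = (transpose (fst P), transpose (snd P))"

definition is_DMPGI :: "('n::finite) dmat \<Rightarrow> 'n dmat \<Rightarrow> bool" where
  "is_DMPGI A X \<longleftrightarrow> dmult (dmult A X) A = A \<and> dmult (dmult X A) X = X \<and>
     dtrans (dmult A X) = dmult A X \<and> dtrans (dmult X A) = dmult X A"

definition dmpgi :: "('n::finite) dmat \<Rightarrow> 'n dmat" where
  "dmpgi A = (THE X. is_DMPGI A X)"

end

theory Submission imports Defs begin


lemma mrd: "((A::real^'n^'m) + B) ** (C::real^'k^'n) = A ** C + B ** C"
  by (vector matrix_matrix_mult_def sum.distrib[symmetric] field_simps)
lemma mnl: "(- (A::real^'n^'m)) ** (C::real^'k^'n) = - (A ** C)"
  by (vector matrix_matrix_mult_def sum_negf[symmetric])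
lemma mnr: "(A::real^'n^'m) ** (- (C::real^'k^'n)) = - (A ** C)"
  by (vector matrix_matrix_mult_def sum_negf[symmetric])

lemma MP_unique:
  fixes A X Y :: "real^'n^'n"
  assumes X: "is_MP A X" and Y: "is_MP A Y" shows "X = Y"
proof -
  have x1: "A ** X ** A = A" and x2: "X ** A ** X = X" and x3: "transpose (A ** X) = A ** X"
    and x4: "transpose (X ** A) = X ** A" using X by (auto simp: is_MP_def)
  have y1: "A ** Y ** A = A" and y2: "Y ** A ** Y = Y" and y3: "transpose (A ** Y) = A ** Y"
    and y4: "transpose (Y ** A) = Y ** A" using Y by (auto simp: is_MP_def)
  have "X = X ** (A ** X)" using x2 by (simp add: matrix_mul_assoc)
  also have "\<dots> = X ** transpose X ** transpose A" using x3
    by (metis matrix_mul_assoc matrix_transpose_mul)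
  also have "\<dots> = X ** transpose X ** transpose (A ** Y ** A)" using y1 by simp
  also have "\<dots> = X ** transpose (A ** X) ** transpose (A ** Y)"
    by (simp add: matrix_transpose_mul matrix_mul_assoc)
  also have "\<dots> = X ** A ** X ** A ** Y" using x3 y3 by (simp add: matrix_mul_assoc)
  also have "\<dots> = X ** A ** Y" using x2 by simp
  finally have ex: "X = X ** A ** Y" .
  have "Y = (Y ** A) ** Y" using y2 by simp
  also have "\<dots> = transpose A ** transpose Y ** Y" using y4
    by (metis matrix_transpose_mul)
  also have "\<dots> = transpose (A ** X ** A) ** transpose Y ** Y" using x1 by simp
  also have "\<dots> = transpose (X ** A) ** transpose (Y ** A) ** Y"
    by (simp add: matrix_transpose_mul matrix_mul_assoc)
  also have "\<dots> = X ** A ** Y ** A ** Y" using x4 y4 by (simp add: matrix_mul_assoc)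
  also have "\<dots> = X ** A ** Y" using y2 by (metis matrix_mul_assoc)
  finally show ?thesis using ex by simp
qed

lemma MP_comm:
  fixes A X P :: "real^'n^'n"
  assumes P: "is_MP A P" and c1: "X ** A = A ** X" and c2: "X ** transpose A = transpose A ** X"
  shows "X ** P = P ** X"
proof -
  have x1: "A ** P ** A = A" and x2: "P ** A ** P = P" and x3: "transpose (A ** P) = A ** P"
    and x4: "transpose (P ** A) = P ** A" using P by (auto simp: is_MP_def)
  have e1: "P = P ** transpose P ** transpose A"
    by (metis x2 x3 matrix_mul_assoc matrix_transpose_mul)
  have e2: "transpose A ** A ** P = transpose A"
    by (metis x1 x3 matrix_mul_assoc matrix_transpose_mul)
  have e3: "P = transpose A ** transpose P ** P"
    by (metis x2 x4 matrix_transpose_mul)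
  have e4: "P ** A ** transpose A = transpose A"
    by (metis x1 x4 matrix_mul_assoc matrix_transpose_mul)
  have "P ** X ** A ** P = P ** transpose P ** (transpose A ** X) ** A ** P"
    using e1 by (metis matrix_mul_assoc)
  also have "\<dots> = P ** transpose P ** X ** (transpose A ** A ** P)"
    using c2 by (metis matrix_mul_assoc)
  also have "\<dots> = P ** X" using e1 e2 c2 by (metis matrix_mul_assoc)
  finally have f1: "P ** X ** A ** P = P ** X" .
  have "P ** A ** X ** P = P ** A ** (X ** transpose A) ** transpose P ** P"
    using e3 by (metis matrix_mul_assoc)
  also have "\<dots> = (P ** A ** transpose A) ** X ** transpose P ** P"
    using c2 by (simp add: matrix_mul_assoc)
  also have "\<dots> = X ** P" using e3 e4 c2 by (metis matrix_mul_assoc)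
  finally have f2: "P ** A ** X ** P = X ** P" .
  show ?thesis using f1 f2 c1 by (metis matrix_mul_assoc)
qed


lemma DMP_real: assumes "is_DMPGI (A, B) X" shows "is_MP A (fst X)"
  using assms by (cases X) (simp add: is_DMPGI_def is_MP_def dmult_def dtrans_def)

lemma mp_inv_eq: assumes "is_MP A X" shows "mp_inv A = X"
  unfolding mp_inv_def using assms MP_unique by blast

lemma neg_eq: "a + b = c + d \<Longrightarrow> - a - b = - c - (d::'a::ab_group_add)"
  by (metis minus_add_distrib diff_conv_add_uminus)

theorem mainTheorem8:
  fixes A B C D :: "real^'n^'n"
  assumes exA: "\<exists>X. is_DMPGI (A, B) X"
    and exC: "\<exists>X. is_DMPGI (C, D) X"
    and exAC: "\<exists>X. is_DMPGI (dmult (A, B) (C, D)) X"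
    and formA: "dmpgi (A, B) = (mp_inv A, - (mp_inv A ** B ** mp_inv A))"
    and formC: "dmpgi (C, D) = (mp_inv C, - (mp_inv C ** D ** mp_inv C))"
    and formAC: "dmpgi (dmult (A, B) (C, D)) =
       (mp_inv (A ** C), - (mp_inv (A ** C) ** (A ** D + B ** C) ** mp_inv (A ** C)))"
    and comm1: "A ** C = C ** A"
    and comm2: "transpose A ** C = C ** transpose A"
    and comm3: "mp_inv C ** B = B ** mp_inv C"
    and comm4: "mp_inv A ** D = D ** mp_inv A"
  shows "dmpgi (dmult (A, B) (C, D)) = dmult (dmpgi (A, B)) (dmpgi (C, D)) \<and>
         dmult (dmpgi (A, B)) (dmpgi (C, D)) = dmult (dmpgi (C, D)) (dmpgi (A, B))"
proof -
  define Ap where "Ap = mp_inv A"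
  define Cp where "Cp = mp_inv C"
  have mpA: "is_MP A Ap" using exA DMP_real mp_inv_eq unfolding Ap_def by metis
  have mpC: "is_MP C Cp" using exC DMP_real mp_inv_eq unfolding Cp_def by metis
  have t1: "A ** transpose C = transpose C ** A"
    using arg_cong[OF comm2, of transpose] by (simp add: matrix_transpose_mul)
  have t2: "transpose C ** transpose A = transpose A ** transpose C"
    using arg_cong[OF comm1, of transpose] by (simp add: matrix_transpose_mul)
  have CAp: "C ** Ap = Ap ** C" using MP_comm[OF mpA, of C] comm1 comm2 by simp
  have ACp: "A ** Cp = Cp ** A" using MP_comm[OF mpC, of A] comm1 t1 by simp
  have CtAp: "transpose C ** Ap = Ap ** transpose C" using MP_comm[OF mpA, of "transpose C"] t1 t2 by simp
  have ApCp: "Ap ** Cp = Cp ** Ap" using MP_comm[OF mpC, of Ap] CAp CtAp by simp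
  have a1: "A ** Ap ** A = A" and a2: "Ap ** A ** Ap = Ap" and a3: "transpose (A ** Ap) = A ** Ap"
    and a4: "transpose (Ap ** A) = Ap ** A" using mpA by (auto simp: is_MP_def)
  have c1: "C ** Cp ** C = C" and c2: "Cp ** C ** Cp = Cp" and c3: "transpose (C ** Cp) = C ** Cp"
    and c4: "transpose (Cp ** C) = Cp ** C" using mpC by (auto simp: is_MP_def)
  have r1: "C ** (Ap ** W) = Ap ** (C ** W)" for W by (metis CAp matrix_mul_assoc)
  have r2: "Cp ** (A ** W) = A ** (Cp ** W)" for W by (metis ACp matrix_mul_assoc)
  have r3: "Cp ** (Ap ** W) = Ap ** (Cp ** W)" for W by (metis ApCp matrix_mul_assoc)
  have r4: "C ** (A ** W) = A ** (C ** W)" for W by (metis comm1 matrix_mul_assoc)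
  have r5: "B ** (Cp ** W) = Cp ** (B ** W)" for W by (metis comm3 Cp_def matrix_mul_assoc)
  have r6: "D ** (Ap ** W) = Ap ** (D ** W)" for W by (metis comm4 Ap_def matrix_mul_assoc)
  have a1': "A ** (Ap ** (A ** W)) = A ** W" for W by (metis a1 matrix_mul_assoc)
  have a2': "Ap ** (A ** (Ap ** W)) = Ap ** W" for W by (metis a2 matrix_mul_assoc)
  have c1': "C ** (Cp ** (C ** W)) = C ** W" for W by (metis c1 matrix_mul_assoc)
  have c2': "Cp ** (C ** (Cp ** W)) = Cp ** W" for W by (metis c2 matrix_mul_assoc)
  have a1r: "A ** (Ap ** A) = A" and a2r: "Ap ** (A ** Ap) = Ap" and c1r: "C ** (Cp ** C) = C"
    and c2r: "Cp ** (C ** Cp) = Cp" using a1 a2 c1 c2 by (simp_all add: matrix_mul_assoc)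
  note rules = matrix_mul_assoc[symmetric] CAp ACp[symmetric] ApCp[symmetric] comm1[symmetric] comm3[folded Cp_def, symmetric]
     comm4[folded Ap_def, symmetric] r1 r2 r3 r4 r5 r6 a1 a2 c1 c2 a1' a2' c1' c2' a1r a2r c1r c2r
  have m1: "A ** C ** (Ap ** Cp) ** (A ** C) = A ** C" by (simp add: rules)
  have m2: "Ap ** Cp ** (A ** C) ** (Ap ** Cp) = Ap ** Cp" by (simp add: rules)
  have e3: "A ** C ** (Ap ** Cp) = (A ** Ap) ** (C ** Cp)" by (simp add: rules)
  have m3: "transpose (A ** C ** (Ap ** Cp)) = A ** C ** (Ap ** Cp)"
    unfolding e3 matrix_transpose_mul[of "A ** Ap" "C ** Cp"] a3 c3 by (simp add: rules)
  have e4: "Ap ** Cp ** (A ** C) = (Ap ** A) ** (Cp ** C)" by (simp add: rules)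
  have m4: "transpose (Ap ** Cp ** (A ** C)) = Ap ** Cp ** (A ** C)"
    unfolding e4 matrix_transpose_mul[of "Ap ** A" "Cp ** C"] a4 c4 by (simp add: rules)
  have mpAC: "mp_inv (A ** C) = Ap ** Cp"
    using mp_inv_eq m1 m2 m3 m4 unfolding is_MP_def by blast
  have d1: "Ap ** Cp ** (A ** D + B ** C) ** (Ap ** Cp) = Ap ** (Cp ** D ** Cp) + (Ap ** B ** Ap) ** Cp"
  proof -
    have r5r: "Cp ** (B ** W) = B ** (Cp ** W)" for W using r5 by metis
    have "Ap ** Cp ** (B ** C) ** (Ap ** Cp) = (Ap ** B ** Ap) ** Cp"
      by (simp only: matrix_mul_assoc[symmetric] r5r r1 r3 c2r)
    moreover have "Ap ** Cp ** (A ** D) ** (Ap ** Cp) = Ap ** (Cp ** D ** Cp)"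
      by (simp add: rules)
    ultimately show ?thesis by (simp add: matrix_add_ldistrib mrd)
  qed
  have d2: "Ap ** (Cp ** D ** Cp) + (Ap ** B ** Ap) ** Cp = Cp ** (Ap ** B ** Ap) + (Cp ** D ** Cp) ** Ap"
  proof -
    have r5r: "Cp ** (B ** W) = B ** (Cp ** W)" for W using r5 by metis
    have "Cp ** (Ap ** B ** Ap) = (Ap ** B ** Ap) ** Cp"
      by (simp only: matrix_mul_assoc[symmetric] r5r r3 ApCp[symmetric])
    moreover have "Ap ** (Cp ** D ** Cp) = (Cp ** D ** Cp) ** Ap" by (simp add: rules)
    ultimately show ?thesis by (simp add: add.commute)
  qed
  have fAC: "dmpgi (dmult (A, B) (C, D)) = (Ap ** Cp, - (Ap ** Cp ** (A ** D + B ** C) ** (Ap ** Cp)))"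
    using formAC mpAC by simp
  have e5: "dmult (dmpgi (A,B)) (dmpgi (C,D)) = (Ap**Cp, -(Ap**(Cp**D**Cp)) - Ap**B**Ap**Cp)"
    by (simp add: formA[folded Ap_def] formC[folded Cp_def] dmult_def mnl mnr)
  have e6: "dmult (dmpgi (C,D)) (dmpgi (A,B)) = (Cp**Ap, -(Cp**(Ap**B**Ap)) - Cp**D**Cp**Ap)"
    by (simp add: formA[folded Ap_def] formC[folded Cp_def] dmult_def mnl mnr)
  have n1: "- (Ap ** Cp ** (A ** D + B ** C) ** (Ap ** Cp)) = -(Ap**(Cp**D**Cp)) - Ap**B**Ap**Cp"
    unfolding d1 by simp
  show ?thesis unfolding fAC e5 e6 n1 using neg_eq[OF d2] ApCp by simp
qed
end
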